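(* Let $[\alpha]_{K\times K}\in\mathcal A_{\mathrm{SLS}}$, let $\pi_1,\dots,\pi_n$ ($n>1$) be disjoint cycles, and let $\pi_{1,2,\dots,n}=(\pi_1\to\pi_2\to\cdots\to\pi_n)$ be their combination. Then $$\Delta_{\pi_{1,2,\dots,n}}\le\Delta_{\pi_1}+\cdots+\Delta_{\pi_n}+\Delta_\pi,\qquad\text{where }\pi=(\pi_1(1)\to\pi_2(1)\to\cdots\to\pi_n(1)).$$
   Context: SLS regime: $\mathcal A_{\mathrm{SLS}}=\{[\alpha]\in\mathbb R_+^{K\times K}:\ \alpha_{ii}\ge\max(\alpha_{ij},\alpha_{ki},\alpha_{ik}+\alpha_{ji}-\alpha_{jk})\ \forall i,j,k\in[K],\ i\notin\{j,k\}\}$. Cycles: a cycle $\pi=(i_1\to\cdots\to i_M)$, $M\ge1$, is an ordered list of distinct indices of $[K]$, read cyclically ($i_{M+1}=i_1$); $\pi(m)=i_m$, in particular $\pi(1)=i_1$ is the head; $\{\pi\}=\{i_1,\dots,i_M\}$; cycles are disjoint if their sets are disjoint. For disjoint cycles $\pi_1=(i_{1,1}\to\cdots\to i_{1,m_1}),\dots,\pi_n=(i_{n,1}\to\cdots\to i_{n,m_n})$, the combined cycle is $(\pi_1\to\cdots\to\pi_n)=(i_{1,1}\to\cdots\to i_{1,m_1}\to i_{2,1}\to\cdots\to i_{2,m_2}\to\cdots\to i_{n,m_n})$. $\delta_{ij}=\alpha_{ii}-\alpha_{ji}$ ($i\neq j$), $\delta_{ii}=0$; $\Delta_\pi=\sum_{m=1}^M\delta_{i_mi_{m+1}}$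 if $M>1$, $\Delta_\pi=\alpha_{i_1i_1}$ if $M=1$. *)

theory Defs
  imports Complex_Main
begin

text \<open>Indices of [K] are rendered as {0..<K}; the matrix alpha as a function nat => nat => real,
  only its entries on [K] x [K] being relevant.\<close>

definition SLS :: "nat \<Rightarrow> (nat \<Rightarrow> nat \<Rightarrow> real) \<Rightarrow> bool" where
  "SLS K \<alpha> \<longleftrightarrow>
     (\<forall>i<K. \<forall>j<K. \<alpha> i j \<ge> 0) \<and>
     (\<forall>i<K. \<forall>j<K. \<forall>k<K. i \<noteq> j \<and> i \<noteq> k \<longrightarrow>
        \<alpha> i i \<ge> max (\<alpha> i j) (max (\<alpha> k i) (\<alpha> i k + \<alpha> j i - \<alpha> j k)))"

text \<open>A cycle is a nonempty list of distinct indices of [K], read cyclically; its head is hd.\<close>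
definition is_cycle :: "nat \<Rightarrow> nat list \<Rightarrow> bool" where
  "is_cycle K c \<longleftrightarrow> c \<noteq> [] \<and> distinct c \<and> set c \<subseteq> {0..<K}"

definition delta :: "(nat \<Rightarrow> nat \<Rightarrow> real) \<Rightarrow> nat \<Rightarrow> nat \<Rightarrow> real" where
  "delta \<alpha> i j = (if i = j then 0 else \<alpha> i i - \<alpha> j i)"

definition Delta :: "(nat \<Rightarrow> nat \<Rightarrow> real) \<Rightarrow> nat list \<Rightarrow> real" where
  "Delta \<alpha> c = (if length c = 1 then \<alpha> (c!0) (c!0)
     else (\<Sum>m<length c. delta \<alpha> (c!m) (c!((m+1) mod length c))))"

definition combine :: "nat list list \<Rightarrow> nat list" where
  "combine ps = concat ps"

end

theory Submission
  imports Defs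
begin

fun chain :: "('a \<Rightarrow> 'a \<Rightarrow> real) \<Rightarrow> 'a list \<Rightarrow> real" where
  "chain e (x#y#r) = e x y + chain e (y#r)"
| "chain e _ = 0"

lemma chain_idx: "(\<Sum>m<length xs - 1. e (xs!m) (xs!Suc m)) = chain e xs"
proof (induction e xs rule: chain.induct)
  case (1 e x y r)
  have "(\<Sum>m<length (x#y#r) - 1. e ((x#y#r)!m) ((x#y#r)!Suc m))
      = (\<Sum>m<Suc (length r). e ((x#y#r)!m) ((x#y#r)!Suc m))" by simp
  also have "\<dots> = e x y + (\<Sum>m<length r. e ((y#r)!m) ((y#r)!Suc m))"
    by (subst sum.lessThan_Suc_shift) simp
  also have "\<dots> = e x y + chain e (y#r)" using 1 by simp
  finally show ?case by simp
qed auto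

lemma cyc:
  assumes "xs \<noteq> []"
  shows "(\<Sum>m<length xs. e (xs!m) (xs!((m+1) mod length xs))) = chain e xs + e (last xs) (hd xs)"
proof -
  obtain k where k: "length xs = Suc k" using assms by (cases xs) auto
  have "(\<Sum>m<length xs. e (xs!m) (xs!((m+1) mod length xs)))
     = (\<Sum>m<k. e (xs!m) (xs!((m+1) mod Suc k))) + e (xs!k) (xs!((k+1) mod Suc k))"
    by (simp add: k)
  also have "(\<Sum>m<k. e (xs!m) (xs!((m+1) mod Suc k))) = (\<Sum>m<k. e (xs!m) (xs!Suc m))"
    by (rule sum.cong) auto
  also have "\<dots> = chain e xs" using chain_idx[of e xs] k by simp
  also have "e (xs!k) (xs!((k+1) mod Suc k)) = e (last xs) (hd xs)"
    using assms k by (simp add: last_conv_nth hd_conv_nth)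
  finally show ?thesis .
qed

lemma chain_append:
  "xs \<noteq> [] \<Longrightarrow> ys \<noteq> [] \<Longrightarrow> chain e (xs @ ys) = chain e xs + e (last xs) (hd ys) + chain e ys"
proof (induction xs)
  case (Cons x xs)
  show ?case
  proof (cases xs)
    case Nil
    then show ?thesis using Cons by (cases ys) auto
  next
    case (Cons z zs)
    then show ?thesis using Cons.IH Cons.prems by simp
  qed
qed simp

lemma chain_concat:
  "\<forall>p\<in>set ps. p \<noteq> [] \<Longrightarrow>
   chain e (concat ps) = (\<Sum>p\<leftarrow>ps. chain e p) + chain (\<lambda>p q. e (last p) (hd q)) ps"
proof (induction ps)
  case (Cons p qs)
  show ?case
  proof (cases qs)
    case Nil then show ?thesis by simp
  next
    case (Cons q r)
    have ne: "concat qs \<noteq> []" "hd (concat qs) = hd q" using Cons.prems Cons by auto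
    have "chain e (concat (p#qs)) = chain e p + e (last p) (hd q) + chain e (concat qs)"
      using chain_append[of p "concat qs" e] ne Cons.prems by simp
    then show ?thesis using Cons.IH Cons.prems Cons by simp
  qed
qed simp

theorem lemma6:
  fixes K :: nat and \<alpha> :: "nat \<Rightarrow> nat \<Rightarrow> real" and ps :: "nat list list"
  assumes "SLS K \<alpha>"
    and "length ps > 1"
    and "\<forall>c\<in>set ps. is_cycle K c"
    and "\<forall>a<length ps. \<forall>b<length ps. a \<noteq> b \<longrightarrow> set (ps!a) \<inter> set (ps!b) = {}"
  shows "Delta \<alpha> (combine ps) \<le> (\<Sum>a<length ps. Delta \<alpha> (ps!a)) + Delta \<alpha> (map hd ps)"
proof -
  define n where "n = length ps"
  define E where "E = (\<lambda>p q. delta \<alpha> (last p) (hd q :: nat))"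
  define s where "s = (\<lambda>a. (a+1) mod n)"
  have n1: "n > 1" using assms(2) n_def by simp
  have cyc_ps: "\<And>a. a < n \<Longrightarrow> is_cycle K (ps!a)" using assms(3) n_def by simp
  have ne: "\<forall>p\<in>set ps. p \<noteq> []" using assms(3) by (auto simp: is_cycle_def)
  have psne: "ps \<noteq> []" using n1 n_def by auto
  define C where "C = concat ps"
  have Cne: "C \<noteq> []" using ne psne C_def by (cases ps) auto
  have lenC: "length C \<ge> n"
  proof -
    have "length C = (\<Sum>p\<leftarrow>ps. length p)" by (simp add: C_def length_concat)
    also have "\<dots> \<ge> (\<Sum>p\<leftarrow>ps. 1)" by (rule sum_list_mono) (use ne in \<open>auto simp: Suc_le_eq\<close>)
    finally show ?thesis by (simp add: n_def sum_list_triv)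
  qed
  have lastC: "last C = last (last ps)" and hdC: "hd C = hd (hd ps)"
    using ne psne unfolding C_def
    by (induction ps) (auto simp: last_append intro!: hd_append2)+
  have "Delta \<alpha> (combine ps) = chain (delta \<alpha>) C + delta \<alpha> (last C) (hd C)"
    using lenC n1 Cne cyc[OF Cne, of "delta \<alpha>"] by (simp add: Delta_def combine_def C_def)
  also have "\<dots> = (\<Sum>a<n. chain (delta \<alpha>) (ps!a)) + (\<Sum>a<n. E (ps!a) (ps!s a))"
    using chain_concat[OF ne, of "delta \<alpha>"] cyc[OF psne, of E] lastC hdC
    by (simp add: C_def E_def s_def n_def sum_list_sum_nth atLeast0LessThan)
  finally have L: "Delta \<alpha> (combine ps) = \<dots>" .
  have H: "Delta \<alpha> (map hd ps) = (\<Sum>a<n. delta \<alpha> (hd (ps!a)) (hd (ps!s a)))"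
    using n1 psne by (auto simp: Delta_def n_def s_def intro!: sum.cong)
  have D: "chain (delta \<alpha>) (ps!a) + delta \<alpha> (last (ps!a)) (hd (ps!a)) \<le> Delta \<alpha> (ps!a)"
    if a: "a < n" for a
  proof -
    have c: "is_cycle K (ps!a)" using cyc_ps a .
    show ?thesis
    proof (cases "length (ps!a) = 1")
      case True
      then obtain x where x: "ps!a = [x]" by (cases "ps!a") auto
      then have "x < K" using c by (auto simp: is_cycle_def)
      then show ?thesis using x assms(1) by (auto simp: SLS_def Delta_def delta_def)
    next
      case False
      then show ?thesis using cyc[of "ps!a" "delta \<alpha>"] c by (simp add: Delta_def is_cycle_def)
    qed
  qed
  have T: "E (ps!a) (ps!s a) \<le> delta \<alpha> (last (ps!a)) (hd (ps!a)) + delta \<alpha> (hd (ps!a)) (hd (ps!s a))"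
    if a: "a < n" for a
  proof -
    define h l h' where "h = hd (ps!a)" and "l = last (ps!a)" and "h' = hd (ps!s a)"
    have sa: "s a < n" "s a \<noteq> a" using a n1 unfolding s_def
      by (auto simp: mod_Suc)
    have ca: "is_cycle K (ps!a)" and cs: "is_cycle K (ps!s a)" using cyc_ps a sa by auto
    have hin: "h \<in> set (ps!a)" "l \<in> set (ps!a)" "h' \<in> set (ps!s a)"
      using ca cs unfolding h_def l_def h'_def is_cycle_def by auto
    have disj: "set (ps!a) \<inter> set (ps!s a) = {}" using assms(4) a sa n_def by auto
    have K: "h < K" "l < K" "h' < K" using hin ca cs unfolding is_cycle_def by auto
    have d: "h' \<noteq> h" "h' \<noteq> l" using hin disj by auto
    show ?thesis
    proof (cases "l = h")
      case True then show ?thesis by (simp add: E_def h_def l_def h'_def[symmetric] delta_def)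
    next
      case False
      have "\<alpha> h h \<ge> \<alpha> h l + \<alpha> h' h - \<alpha> h' l"
        using assms(1) K d False unfolding SLS_def by (metis max.bounded_iff)
      then show ?thesis using False d
        by (simp add: E_def h_def[symmetric] l_def[symmetric] h'_def[symmetric] delta_def)
    qed
  qed
  have "(\<Sum>a<n. chain (delta \<alpha>) (ps!a)) + (\<Sum>a<n. E (ps!a) (ps!s a))
      \<le> (\<Sum>a<n. chain (delta \<alpha>) (ps!a)) + (\<Sum>a<n. delta \<alpha> (last (ps!a)) (hd (ps!a)) + delta \<alpha> (hd (ps!a)) (hd (ps!s a)))"
    using T by (intro add_left_mono sum_mono) auto
  also have "\<dots> = (\<Sum>a<n. chain (delta \<alpha>) (ps!a) + delta \<alpha> (last (ps!a)) (hd (ps!a))) + (\<Sum>a<n. delta \<alpha> (hd (ps!a)) (hd (ps!s a)))"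
    by (simp add: sum.distrib)
  also have "\<dots> \<le> (\<Sum>a<n. Delta \<alpha> (ps!a)) + (\<Sum>a<n. delta \<alpha> (hd (ps!a)) (hd (ps!s a)))"
    using D by (intro add_right_mono sum_mono) auto
  finally show ?thesis using L H n_def by simp
qed

end
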